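(* Let $t_{11},t_{14},t_{21},t_{22},t_{32}\in\mathbb{C}$ be constants and let $\varepsilon:L\to\bar L$ be defined by $\langle\varepsilon(x),y\rangle=\tilde\varepsilon(x,y)$, where $$\tilde\varepsilon=t_{32}\,\bar T^*\wedge\bar W^*-t_{11}\,\bar T^*\wedge\omega^*-t_{21}\,\bar T^*\wedge\rho^*-t_{22}\,\bar W^*\wedge\rho^*+t_{14}\,\omega^*\wedge\rho^*,$$ and suppose $\varepsilon$ is small enough that $L_\varepsilon=\{x+\varepsilon(x):x\in L\}$ satisfies $L_\varepsilon\cap\bar L_\varepsilon=0$ (so that $L_\varepsilon$ is a generalized complex structure). Then the type of $L_\varepsilon$ is constant on $N$ and equals $0$ (symplectic type) if $t_{14}\neq0$, and $2$ (complex type) if $t_{14}=0$.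
   Context: Let $N$ be a primary Kodaira surface (real dimension 4). As a real manifold $N$ is parallelizable: there are global real vector fields $X,Y,U,V$ forming a frame of $T_N$ whose only nonzero Lie bracket is $[X,Y]=U$, with standard complex structure $JX=Y$, $JY=-X$, $JU=V$, $JV=-U$. Put $T=\frac12(X-iY)$, $W=\frac12(U-iV)$; then $\{T,W,\bar T,\bar W\}$ is a global frame of $T_N\otimes\mathbb{C}$ whose only nonzero bracket is $[T,\bar T]=\frac i2(W+\bar W)$, and $\{\omega,\rho,\bar\omega,\bar\rho\}$ is the dual coframe. On $(T_N\oplus T_N^* )\otimes\mathbb{C}$ use the inner product $\langle X+\sigma,Y+\tau\rangle=\frac12(\sigma(Y)+\tau(X))$ and the Courant bracket $[X+\sigma,Y+\tau]=[X,Y]+\mathcal L_X\tau-\mathcal L_Y\sigma-\frac12 d(i_X\tau-i_Y\sigma)$. A generalized complex structure is a maximal isotropic, Courant-involutive subbundle $E\subset(T_N\oplus T_N^* )\otimes\mathbb{C}$ with $E\cap\bar E=0$; its type at $p\in N$ is the complex codimension of $\pi_T(E_p)$ in $T_pN\otimes\mathbb{C}$, where $\pi_T$ is the projection to the tangent part. $L$ is the subbundle spanned by $\bar T,\bar W,\omega,\rho$, $\bar L$ the one spanned by $T,W,\bar\omega,\bar\rho$, and $\{\bar T^*,\bar W^*,\omega^*,\rho^*\}$ is the frame of $L^*$ dual to $\{\bar T,\bar W,\omega,\rho\}$. Wedge products are evaluated as $(\alpha\wedge\beta)(x,y)=\alpha(x)\beta(y)-\alpha(y)\beta(x)$. (For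 these $\tilde\varepsilon$ the Maurer–Cartan equation holds, so $L_\varepsilon$ is Courant involutive.) *)

theory Defs
  imports "HOL-Analysis.Analysis" "HOL-Library.Function_Algebras"
begin

text \<open>Fibrewise model of (T_N + T_N^*) tensor C for the primary Kodaira surface.
  Since N is parallelizable with the global frame T, W, Tbar, Wbar and dual coframe
  omega, rho, omegabar, rhobar, and all data below have constant coefficients in
  this frame, every fibre is the same 8-dimensional complex vector space.
  A tangent vector is given by its coefficients w.r.t. T, W, Tbar, Wbar;
  a covector by its coefficients w.r.t. omega, rho, omegabar, rhobar
  (indexed by the tangent frame element they are dual to).\<close>

datatype fidx = fT | fW | fTb | fWb

type_synonym tvec = "fidx \<Rightarrow> complex"
type_synonym cvec = "fidx \<Rightarrow> complex"
type_synonym gvec = "tvec \<times> cvec"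

definition pairing :: "cvec \<Rightarrow> tvec \<Rightarrow> complex" where
  "pairing \<sigma> X = (\<Sum>k\<in>UNIV. \<sigma> k * X k)"

lemma UNIV_fidx: "(UNIV :: fidx set) = {fT, fW, fTb, fWb}"
  using fidx.exhaust by auto

instance fidx :: finite
  by standard (simp add: UNIV_fidx)

definition ip :: "gvec \<Rightarrow> gvec \<Rightarrow> complex" where
  "ip u v = (pairing (snd u) (fst v) + pairing (snd v) (fst u)) / 2"

definition gadd :: "gvec \<Rightarrow> gvec \<Rightarrow> gvec" where
  "gadd u v = ((\<lambda>k. fst u k + fst v k), (\<lambda>k. snd u k + snd v k))"

definition gscale :: "complex \<Rightarrow> gvec \<Rightarrow> gvec" where
  "gscale c u = ((\<lambda>k. c * fst u k), (\<lambda>k. c * snd u k))"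

definition gzero :: gvec where
  "gzero = ((\<lambda>k. 0), (\<lambda>k. 0))"

fun bar_idx :: "fidx \<Rightarrow> fidx" where
  "bar_idx fT = fTb" | "bar_idx fW = fWb" | "bar_idx fTb = fT" | "bar_idx fWb = fW"

definition gconj :: "gvec \<Rightarrow> gvec" where
  "gconj u = ((\<lambda>k. cnj (fst u (bar_idx k))), (\<lambda>k. cnj (snd u (bar_idx k))))"

definition tframe :: "fidx \<Rightarrow> gvec" where
  "tframe i = ((\<lambda>k. if k = i then 1 else 0), (\<lambda>k. 0))"
definition cframe :: "fidx \<Rightarrow> gvec" where
  "cframe i = ((\<lambda>k. 0), (\<lambda>k. if k = i then 1 else 0))"

definition Lsub :: "gvec set" where
  "Lsub = {gadd (gadd (gscale p (tframe fTb)) (gscale q (tframe fWb)))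
                (gadd (gscale r (cframe fT)) (gscale s (cframe fW))) | p q r s. True}"

definition Lbar :: "gvec set" where
  "Lbar = {gadd (gadd (gscale p (tframe fT)) (gscale q (tframe fW)))
                (gadd (gscale r (cframe fTb)) (gscale s (cframe fWb))) | p q r s. True}"

definition Tb_star :: "gvec \<Rightarrow> complex" where "Tb_star y = fst y fTb"
definition Wb_star :: "gvec \<Rightarrow> complex" where "Wb_star y = fst y fWb"
definition om_star :: "gvec \<Rightarrow> complex" where "om_star y = snd y fT"
definition rho_star :: "gvec \<Rightarrow> complex" where "rho_star y = snd y fW"

definition wedge :: "(gvec \<Rightarrow> complex) \<Rightarrow> (gvec \<Rightarrow> complex) \<Rightarrow> gvec \<Rightarrow> gvec \<Rightarrow> complex" where
  "wedge \<alpha> \<beta> x y = \<alpha> x * \<beta> y - \<alpha> y * \<beta> x"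

definition eps_tilde :: "complex \<Rightarrow> complex \<Rightarrow> complex \<Rightarrow> complex \<Rightarrow> complex \<Rightarrow> gvec \<Rightarrow> gvec \<Rightarrow> complex" where
  "eps_tilde t11 t14 t21 t22 t32 x y =
      t32 * wedge Tb_star Wb_star x y - t11 * wedge Tb_star om_star x y
    - t21 * wedge Tb_star rho_star x y - t22 * wedge Wb_star rho_star x y
    + t14 * wedge om_star rho_star x y"

definition cdim :: "tvec set \<Rightarrow> nat" where
  "cdim S = vector_space.dim (\<lambda>(c::complex) (v::tvec) k. c * v k) S"

definition gc_type :: "gvec set \<Rightarrow> nat" where
  "gc_type E = 4 - cdim (fst ` E)"

end

theory Submission imports Defs begin

interpretation VS: vector_space "\<lambda>(c::complex) (v::tvec) k. c * v k"
  by unfold_locales (auto simp: fun_eq_iff algebra_simps)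

definition Lel :: "complex \<Rightarrow> complex \<Rightarrow> complex \<Rightarrow> complex \<Rightarrow> gvec" where
  "Lel p q r s = gadd (gadd (gscale p (tframe fTb)) (gscale q (tframe fWb)))
                (gadd (gscale r (cframe fT)) (gscale s (cframe fW)))"

lemma Lel_fst: "fst (Lel p q r s) = (\<lambda>k. case k of fTb \<Rightarrow> p | fWb \<Rightarrow> q | _ \<Rightarrow> 0)"
  by (auto simp: Lel_def gadd_def gscale_def tframe_def cframe_def fun_eq_iff split: fidx.split)
lemma Lel_snd: "snd (Lel p q r s) = (\<lambda>k. case k of fT \<Rightarrow> r | fW \<Rightarrow> s | _ \<Rightarrow> 0)"
  by (auto simp: Lel_def gadd_def gscale_def tframe_def cframe_def fun_eq_iff split: fidx.split)

lemma Lsub_Lel: "Lsub = {Lel p q r s | p q r s. True}"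
  by (simp add: Lsub_def Lel_def)

lemma ip_Lel: "ip e (Lel p q r s) = (snd e fTb * p + snd e fWb * q + r * fst e fT + s * fst e fW) / 2"
  by (simp add: ip_def pairing_def UNIV_fidx Lel_fst Lel_snd)

lemma et_Lel: "eps_tilde t11 t14 t21 t22 t32 (Lel p q r s) (Lel p2 q2 r2 s2) =
   t32*(p*q2 - q*p2) - t11*(p*r2 - r*p2) - t21*(p * s2 - s*p2) - t22*(q * s2 - s*q2) + t14*(r * s2 - s*r2)"
  by (simp add: algebra_simps eps_tilde_def wedge_def Tb_star_def Wb_star_def om_star_def rho_star_def Lel_fst Lel_snd)

lemma Lbar_fst: "e \<in> Lbar \<Longrightarrow> fst e fTb = 0 \<and> fst e fWb = 0"
  by (auto simp: Lbar_def gadd_def gscale_def tframe_def cframe_def)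

definition tf :: "complex \<Rightarrow> complex \<Rightarrow> complex \<Rightarrow> complex \<Rightarrow> complex \<Rightarrow> complex \<Rightarrow> complex \<Rightarrow> complex \<Rightarrow> tvec" where
  "tf t11 t14 t21 t22 p q r s = (\<lambda>k. case k of fT \<Rightarrow> -2*(t11*p + t14 * s) | fW \<Rightarrow> 2*(t14*r - t21*p - t22*q) | fTb \<Rightarrow> p | fWb \<Rightarrow> q)"

lemma image_char:
  assumes eps_range: "\<forall>x\<in>Lsub. eps x \<in> Lbar"
    and eps_def: "\<forall>x\<in>Lsub. \<forall>y\<in>Lsub. ip (eps x) y = eps_tilde t11 t14 t21 t22 t32 x y"
  shows "fst ` {gadd x (eps x) | x. x \<in> Lsub} = {tf t11 t14 t21 t22 p q r s | p q r s. True}"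
proof -
  have key: "fst (gadd (Lel p q r s) (eps (Lel p q r s))) = tf t11 t14 t21 t22 p q r s" for p q r s
  proof -
    let ?e = "eps (Lel p q r s)"
    have inL: "Lel a b c d \<in> Lsub" for a b c d by (auto simp: Lsub_Lel)
    have b: "fst ?e fTb = 0" "fst ?e fWb = 0" using Lbar_fst eps_range inL by blast+
    have 1: "ip ?e (Lel 0 0 1 0) = eps_tilde t11 t14 t21 t22 t32 (Lel p q r s) (Lel 0 0 1 0)"
      using eps_def inL by blast
    have 2: "ip ?e (Lel 0 0 0 1) = eps_tilde t11 t14 t21 t22 t32 (Lel p q r s) (Lel 0 0 0 1)"
      using eps_def inL by blast
    from 1 have a1: "fst ?e fT = -2*(t11*p + t14 * s)" by (simp add: ip_Lel et_Lel field_simps)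
    from 2 have a2: "fst ?e fW = 2*(t14*r - t21*p - t22*q)" by (simp add: ip_Lel et_Lel field_simps)
    show ?thesis using a1 a2 b by (auto simp: gadd_def tf_def Lel_fst fun_eq_iff split: fidx.split)
  qed
  have inL: "Lel a b c d \<in> Lsub" for a b c d by (auto simp: Lsub_Lel)
  show ?thesis
  proof (intro equalityI subsetI)
    fix v assume "v \<in> fst ` {gadd x (eps x) | x. x \<in> Lsub}"
    then obtain y where y: "y \<in> {gadd x (eps x) | x. x \<in> Lsub}" "v = fst y" by (rule imageE)
    from y(1) obtain x where x: "x \<in> Lsub" "y = gadd x (eps x)" by blast
    from x(1) obtain p q r s where "x = Lel p q r s" unfolding Lsub_Lel by blast
    then have "v = tf t11 t14 t21 t22 p q r s" using key y(2) x(2) by simp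
    then show "v \<in> {tf t11 t14 t21 t22 p q r s | p q r s. True}" by blast
  next
    fix v assume "v \<in> {tf t11 t14 t21 t22 p q r s | p q r s. True}"
    then obtain p q r s where v: "v = tf t11 t14 t21 t22 p q r s" by blast
    have "gadd (Lel p q r s) (eps (Lel p q r s)) \<in> {gadd x (eps x) | x. x \<in> Lsub}"
      using inL[of p q r s] by blast
    then show "v \<in> fst ` {gadd x (eps x) | x. x \<in> Lsub}" unfolding v key[symmetric] by (rule imageI)
  qed
qed


definition ev :: "fidx \<Rightarrow> tvec" where "ev i = (\<lambda>k. if k = i then 1 else 0)"

lemma ev_distinct: "ev fT \<noteq> ev fW" "ev fT \<noteq> ev fTb" "ev fT \<noteq> ev fWb"
  "ev fW \<noteq> ev fTb" "ev fW \<noteq> ev fWb" "ev fTb \<noteq> ev fWb"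
  by (auto simp: ev_def fun_eq_iff)

lemma sum_apply_fun: "(\<Sum>v\<in>S. f v) (k::fidx) = (\<Sum>v\<in>S. f v k)" for f :: "'a \<Rightarrow> tvec"
  by (induction S rule: infinite_finite_induct) auto

lemma dim_UNIV4: "VS.dim (UNIV :: tvec set) = 4"
proof (rule VS.dim_unique[of "{ev fT, ev fW, ev fTb, ev fWb}"])
  show "{ev fT, ev fW, ev fTb, ev fWb} \<subseteq> UNIV" by simp
  show "card {ev fT, ev fW, ev fTb, ev fWb} = 4" using ev_distinct by simp
  show "VS.independent {ev fT, ev fW, ev fTb, ev fWb}"
  proof
    assume "VS.dependent {ev fT, ev fW, ev fTb, ev fWb}"
    then obtain u where u: "\<exists>v\<in>{ev fT, ev fW, ev fTb, ev fWb}. u v \<noteq> 0"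
      and s: "(\<Sum>v\<in>{ev fT, ev fW, ev fTb, ev fWb}. u v * v k) = 0" for k
      by (subst (asm) VS.dependent_finite) (auto simp: fun_eq_iff sum_apply_fun)
    have "u (ev k) = 0" for k
      using s[of k] ev_distinct by (cases k) (simp_all add: ev_def)
    with u show False by auto
  qed
  show "UNIV \<subseteq> VS.span {ev fT, ev fW, ev fTb, ev fWb}"
  proof
    fix v :: tvec
    let ?u = "\<lambda>w::tvec. \<Sum>k\<in>UNIV. w k * v k"
    have "v k = (\<Sum>w\<in>{ev fT, ev fW, ev fTb, ev fWb}. (\<lambda>k. ?u w * w k)) k" for k
      using ev_distinct by (cases k) (simp_all add: sum_apply_fun UNIV_fidx ev_def)
    then have "v = (\<Sum>w\<in>{ev fT, ev fW, ev fTb, ev fWb}. (\<lambda>k. ?u w * w k))" by blast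
    then show "v \<in> VS.span {ev fT, ev fW, ev fTb, ev fWb}"
      by (subst VS.span_finite) auto
  qed
qed


lemma tf_UNIV: "t14 \<noteq> 0 \<Longrightarrow> {tf t11 t14 t21 t22 p q r s | p q r s. True} = UNIV"
proof -
  assume t: "t14 \<noteq> 0"
  have "v \<in> {tf t11 t14 t21 t22 p q r s | p q r s. True}" for v
  proof -
    let ?p = "v fTb" and ?q = "v fWb"
    let ?s = "-(v fT/2 + t11 * ?p)/t14" and ?r = "(v fW/2 + t21 * ?p + t22 * ?q)/t14"
    have "v k = tf t11 t14 t21 t22 ?p ?q ?r ?s k" for k
      using t by (cases k) (simp_all add: tf_def field_simps)
    then have "v = tf t11 t14 t21 t22 ?p ?q ?r ?s" by blast
    then show ?thesis by blast
  qed
  then show ?thesis by blast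
qed

lemma dim_two: "VS.dim {tf t11 0 t21 t22 p q r s | p q r s. True} = 2"
proof -
  let ?v1 = "tf t11 0 t21 t22 1 0 0 0" and ?v2 = "tf t11 0 t21 t22 0 1 0 0"
  have d: "?v1 \<noteq> ?v2" proof assume "?v1 = ?v2" then have "?v1 fTb = ?v2 fTb" by simp then show False by (simp add: tf_def) qed
  show ?thesis
  proof (rule VS.dim_unique[of "{?v1, ?v2}"])
    show "{?v1, ?v2} \<subseteq> {tf t11 0 t21 t22 p q r s | p q r s. True}" by blast
    show "card {?v1, ?v2} = 2" using d by simp
    show "VS.independent {?v1, ?v2}"
    proof
      assume "VS.dependent {?v1, ?v2}"
      then obtain u where u: "\<exists>v\<in>{?v1, ?v2}. u v \<noteq> 0"
        and s: "(\<Sum>v\<in>{?v1, ?v2}. u v * v k) = 0" for k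
        by (subst (asm) VS.dependent_finite) (auto simp: fun_eq_iff sum_apply_fun)
      have "u ?v1 * ?v1 fTb + u ?v2 * ?v2 fTb = 0" using s[of fTb] d by simp
      then have "u ?v1 = 0" by (simp add: tf_def)
      moreover have "u ?v1 * ?v1 fWb + u ?v2 * ?v2 fWb = 0" using s[of fWb] d by simp
      then have "u ?v2 = 0" by (simp add: tf_def)
      ultimately show False using u by auto
    qed
    show "{tf t11 0 t21 t22 p q r s | p q r s. True} \<subseteq> VS.span {?v1, ?v2}"
    proof
      fix v assume "v \<in> {tf t11 0 t21 t22 p q r s | p q r s. True}"
      then obtain p q r s where v: "v = tf t11 0 t21 t22 p q r s" by blast
      let ?u = "\<lambda>w. if w = ?v1 then p else q"
      have e: "(\<Sum>w\<in>{?v1, ?v2}. (\<lambda>k. ?u w * w k)) = (\<lambda>k. ?u ?v1 * ?v1 k) + (\<lambda>k. ?u ?v2 * ?v2 k)"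
        using d by simp
      have "v k = p * ?v1 k + q * ?v2 k" for k
        by (cases k) (simp_all add: v tf_def algebra_simps)
      then have "v k = (\<Sum>w\<in>{?v1, ?v2}. (\<lambda>k. ?u w * w k)) k" for k
        unfolding e using d by simp
      then have "v = (\<Sum>w\<in>{?v1, ?v2}. (\<lambda>k. ?u w * w k))" by blast
      then show "v \<in> VS.span {?v1, ?v2}"
        by (subst VS.span_finite) auto
    qed
  qed
qed

theorem proposition4p11:
  fixes t11 t14 t21 t22 t32 :: complex
    and eps :: "gvec \<Rightarrow> gvec"
  assumes eps_range: "\<forall>x\<in>Lsub. eps x \<in> Lbar"
    and eps_def: "\<forall>x\<in>Lsub. \<forall>y\<in>Lsub. ip (eps x) y = eps_tilde t11 t14 t21 t22 t32 x y"
    and small: "{gadd x (eps x) | x. x \<in> Lsub} \<inter> gconj ` {gadd x (eps x) | x. x \<in> Lsub} = {gzero}"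
  shows "gc_type {gadd x (eps x) | x. x \<in> Lsub} = (if t14 \<noteq> 0 then 0 else 2)"
proof -
  have I: "fst ` {gadd x (eps x) | x. x \<in> Lsub} = {tf t11 t14 t21 t22 p q r s | p q r s. True}"
    by (rule image_char[OF eps_range eps_def])
  have c: "cdim S = VS.dim S" for S by (simp add: cdim_def)
  show ?thesis
  proof (cases "t14 = 0")
    case True
    then show ?thesis unfolding gc_type_def I c using dim_two by simp
  next
    case False
    then show ?thesis unfolding gc_type_def I c using dim_UNIV4 tf_UNIV[OF False] by simp
  qed
qed

end
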